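(* Let $d\in\mathbb{Z}_{\ge1}$, $\gamma\in\mathbb{Z}_{\ge2}$, and let integers $y(\ell),x^{\mathrm{bin}}(\ell),z(\ell)$ ($0\le\ell\le d-1$), $r(\ell)$ ($0\le\ell\le d$) form a solution of the constraint system $\mathcal{S}(d,\gamma)$. If $r(d)=\gamma^i$ for some integer $i$ with $1\le i\le 2^d-1$, then $(x^{\mathrm{bin}}(0),\dots,x^{\mathrm{bin}}(d-1))$ is the binary encoding of $i$, i.e. $i=\sum_{\ell=0}^{d-1}2^\ell x^{\mathrm{bin}}(\ell)$.
   Context: Constraint system $\mathcal{S}(d,\gamma)$: for given integers $d\ge1$, $\gamma\ge2$, integer variables $y(\ell),x^{\mathrm{bin}}(\ell),z(\ell)$ for $\ell\in\{0,\dots,d-1\}$ and $r(\ell)$ for $\ell\in\{0,\dots,d\}$, subject to, for every $\ell\in\{0,\dots,d-1\}$ (writing $g_\ell:=\gamma^{2^\ell}$): (C1) $y(\ell)\ge0$; (C2) $y(\ell)\le r(\ell+1)/g_\ell+1/(g_\ell+1)$; (C3) $y(\ell)\ge r(\ell+1)/g_\ell-(g_\ell-1)/g_\ell$; (C4) $x^{\mathrm{bin}}(\ell)\ge0$; (C5) $x^{\mathrm{bin}}(\ell)\le1$; (C6) $x^{\mathrm{bin}}(\ell)\le y(\ell)$; (C7) $y(\ell)\le(g_\ell+1)x^{\mathrm{bin}}(\ell)$; (C8) $r(\ell)\ge0$; (C9) $(g_\ell-1)z(\ell)+r(\ell)=r(\ell+1)$; (C10) $z(\ell)\ge0$; (C11)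 $z(\ell)\ge -g_\ell+g_\ell x^{\mathrm{bin}}(\ell)+r(\ell)$; (C12) $z(\ell)\le g_\ell x^{\mathrm{bin}}(\ell)$; (C13) $z(\ell)\le r(\ell)$; and additionally $r(0)=1$, $r(d)\ge2$, $r(d)\le\gamma^{2^d-1}$. *)

theory Defs
  imports Main HOL.Rat
begin

text \<open>Variables are integer-valued functions on
  indices; only indices 0..d-1 (for y, xbin, z) and 0..d (for r) are constrained.
  Constraints with fractions are read over the rationals. g l = gamma^(2^l).\<close>

definition sysS :: "nat \<Rightarrow> int \<Rightarrow> (nat \<Rightarrow> int) \<Rightarrow> (nat \<Rightarrow> int) \<Rightarrow> (nat \<Rightarrow> int) \<Rightarrow> (nat \<Rightarrow> int) \<Rightarrow> bool"
  where "sysS d \<gamma> y xbin z r \<longleftrightarrow>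
    (\<forall>l<d. let g = \<gamma> ^ (2 ^ l) in
       y l \<ge> 0 \<and>
       (of_int (y l) :: rat) \<le> of_int (r (Suc l)) / of_int g + 1 / (of_int g + 1) \<and>
       (of_int (y l) :: rat) \<ge> of_int (r (Suc l)) / of_int g - (of_int g - 1) / of_int g \<and>
       xbin l \<ge> 0 \<and>
       xbin l \<le> 1 \<and>
       xbin l \<le> y l \<and>
       y l \<le> (g + 1) * xbin l \<and>
       r l \<ge> 0 \<and>
       (g - 1) * z l + r l = r (Suc l) \<and>
       z l \<ge> 0 \<and>
       z l \<ge> - g + g * xbin l + r l \<and>
       z l \<le> g * xbin l \<and>
       z l \<le> r l) \<and>
    r 0 = 1 \<and> r d \<ge> 2 \<and> r d \<le> \<gamma> ^ (2 ^ d - 1)"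

end

theory Submission
  imports Defs
begin

theorem mainTheorem7:
  fixes d :: nat and \<gamma> :: int and y xbin z r :: "nat \<Rightarrow> int" and i :: nat
  assumes "d \<ge> 1" and "\<gamma> \<ge> 2"
    and "sysS d \<gamma> y xbin z r"
    and "1 \<le> i" and "i \<le> 2 ^ d - 1"
    and "r d = \<gamma> ^ i"
  shows "int i = (\<Sum>l<d. 2 ^ l * xbin l)"
proof -
  define e where "e k = (\<Sum>l<k. if xbin l = 1 then (2::nat) ^ l else 0)" for k
  have S: "\<And>l. l < d \<Longrightarrow> xbin l \<ge> 0 \<and> xbin l \<le> 1 \<and>
       (\<gamma>^(2^l) - 1) * z l + r l = r (Suc l) \<and> z l \<ge> 0 \<and>
       z l \<ge> - (\<gamma>^(2^l)) + \<gamma>^(2^l) * xbin l + r l \<and> z l \<le> \<gamma>^(2^l) * xbin l \<and> z l \<le> r l"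
    using assms(3) unfolding sysS_def Let_def by blast
  have r0: "r 0 = 1" using assms(3) unfolding sysS_def by blast
  have step: "r (Suc l) = r l * \<gamma> ^ (if xbin l = 1 then 2^l else 0)" if "l < d" for l
  proof -
    note s = S[OF that]
    show ?thesis
    proof (cases "xbin l = 1")
      case True
      then have "z l = r l" using s by auto
      then show ?thesis using s True by (simp add: algebra_simps)
    next
      case False
      then have "xbin l = 0" using s by auto
      then have "z l = 0" using s by auto
      then show ?thesis using s False by simp
    qed
  qed
  have R: "k \<le> d \<Longrightarrow> r k = \<gamma> ^ e k" for k
  proof (induction k)
    case 0 then show ?case using r0 by (simp add: e_def)
  next
    case (Suc k)
    then have "r (Suc k) = \<gamma> ^ e k * \<gamma> ^ (if xbin k = 1 then 2^k else 0)"
      using step by simp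
    also have "\<dots> = \<gamma> ^ e (Suc k)" by (simp add: e_def power_add)
    finally show ?case .
  qed
  have "\<gamma> ^ i = \<gamma> ^ e d" using R[of d] assms(6) by simp
  then have ie: "i = e d" using assms(2) by (simp add: power_inject_exp)
  have "int (e d) = (\<Sum>l<d. 2 ^ l * xbin l)"
    unfolding e_def of_nat_sum
  proof (rule sum.cong)
    fix l assume "l \<in> {..<d}"
    then have "xbin l = 0 \<or> xbin l = 1" using S[of l] by auto
    then show "int (if xbin l = 1 then 2 ^ l else 0) = 2 ^ l * xbin l" by auto
  qed simp
  then show ?thesis using ie by simp
qed

end
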